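(* Let $n\ge 1$ and let $P\in\mathbb{R}^{n\times n}$ be a row-stochastic matrix. Let $P_S:\{w\in\mathbb{R}^n: w_1+\dots+w_n=0\}\to\mathbb{R}^n$ denote the restriction of $P$ to the subspace of vectors with mean zero, and suppose $\|P_S\|<1$. Let $w\in\mathbb{R}^n$ be a global maximizer of $$L(w)=\langle w,Pw\rangle-\sum_{i=1}^n\log\Big(\sum_{j=1}^n\exp(w_iw_j)\Big)$$ over $\mathbb{R}^n$. If $$\left|\left\langle w,\frac{\mathbf{1}}{\sqrt n}\right\rangle\right|\le\frac{1-\|P_S\|}{3}\,\|w\|,$$ where $\mathbf{1}=(1,1,\dots,1)\in\mathbb{R}^n$, then $$\|w\|^2\le\frac{2n\log n}{1-\|P_S\|}.$$
   Context: A matrix is row-stochastic if its entries are non-negative and each row sums to $1$. $\|\cdot\|$ denotes the Euclidean norm on vectors and $\langle\cdot,\cdot\rangle$ the standard inner product; $\|P_S\|$ is the operator norm of $P_S$ with respect to the Euclidean norms on its domain (the mean-zero subspace) and on $\mathbb{R}^n$, i.e. $\|P_S\|=\sup\{\|Pu\|:\ u_1+\dots+u_n=0,\ \|u\|=1\}$. *)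

theory Defs
  imports "HOL-Analysis.Analysis"
begin

definition row_stochastic :: "real^'n^'n \<Rightarrow> bool" where
  "row_stochastic P \<longleftrightarrow> (\<forall>i j. P $ i $ j \<ge> 0) \<and> (\<forall>i. (\<Sum>j\<in>UNIV. P $ i $ j) = 1)"

definition mean_zero :: "(real^'n) set" where
  "mean_zero = {u. (\<Sum>i\<in>UNIV. u $ i) = 0}"

definition restr_norm :: "real^'n^'n \<Rightarrow> real" where
  "restr_norm P = Sup (insert 0 {norm (P *v u) | u. u \<in> mean_zero \<and> norm u = 1})"

definition ones_vec :: "real^'n" where
  "ones_vec = (\<chi> i. 1)"

definition L_obj :: "real^'n^'n \<Rightarrow> real^'n \<Rightarrow> real" where
  "L_obj P w = w \<bullet> (P *v w) - (\<Sum>i\<in>UNIV. ln (\<Sum>j\<in>UNIV. exp (w $ i * w $ j)))"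

end

theory Submission
  imports Defs
begin

lemma P_ones:
  fixes P :: "real^'n^'n"
  assumes "row_stochastic P"
  shows "P *v ones_vec = ones_vec"
  using assms unfolding row_stochastic_def ones_vec_def
  by (simp add: vec_eq_iff matrix_vector_mult_def)

lemma restr_bound:
  fixes P :: "real^'n^'n"
  assumes "u \<in> mean_zero"
  shows "norm (P *v u) \<le> restr_norm P * norm u" and "restr_norm P \<ge> 0"
proof -
  obtain K where K: "\<And>x. norm (P *v x) \<le> norm x * K"
    using bounded_linear.bounded[OF matrix_vector_mul_bounded_linear[of P]] by blast
  let ?S = "insert 0 {norm (P *v u) | u. u \<in> mean_zero \<and> norm u = 1}"
  have bdd: "bdd_above ?S"
  proof (rule bdd_aboveI[of _ "max 0 K"])
    fix x assume "x \<in> ?S"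
    then show "x \<le> max 0 K"
    proof
      assume "x \<in> {norm (P *v u) | u. u \<in> mean_zero \<and> norm u = 1}"
      then obtain v where "x = norm (P *v v)" "norm v = 1" by blast
      then show ?thesis using K[of v] by simp
    qed simp
  qed
  show "restr_norm P \<ge> 0" unfolding restr_norm_def
    using cSup_upper[OF _ bdd, of 0] by simp
  show "norm (P *v u) \<le> restr_norm P * norm u"
  proof (cases "u = 0")
    case True then show ?thesis by simp
  next
    case False
    let ?v = "u /\<^sub>R norm u"
    have "?v \<in> mean_zero" using assms unfolding mean_zero_def
      by (simp add: sum_distrib_left[symmetric])
    moreover have "norm ?v = 1" using False by simp
    ultimately have "norm (P *v ?v) \<in> ?S" by blast
    hence "norm (P *v ?v) \<le> restr_norm P" unfolding restr_norm_def
      using cSup_upper[OF _ bdd] by blast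
    moreover have "P *v ?v = (P *v u) /\<^sub>R norm u"
      by (simp add: matrix_vector_mult_scaleR)
    ultimately have "inverse (norm u) * norm (P *v u) \<le> restr_norm P" by simp
    hence "norm u * (inverse (norm u) * norm (P *v u)) \<le> norm u * restr_norm P"
      by (rule mult_left_mono) simp
    moreover have "norm u * (inverse (norm u) * norm (P *v u)) = norm (P *v u)"
      using False by simp
    ultimately show ?thesis by (simp add: mult.commute)
  qed
qed

theorem theorem3p3:
  fixes P :: "real^'n^'n" and w :: "real^'n"
  assumes "row_stochastic P"
    and "restr_norm P < 1"
    and "\<forall>v. L_obj P v \<le> L_obj P w"
    and "\<bar>w \<bullet> (ones_vec /\<^sub>R sqrt (real CARD('n)))\<bar> \<le> (1 - restr_norm P) / 3 * norm w"
  shows "(norm w)\<^sup>2 \<le> 2 * real CARD('n) * ln (real CARD('n)) / (1 - restr_norm P)"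
proof -
  define n where "n = real CARD('n)"
  define s where "s = restr_norm P"
  define e :: "real^'n" where "e = ones_vec /\<^sub>R sqrt n"
  define a where "a = w \<bullet> e"
  define u where "u = w - a *\<^sub>R e"
  have npos: "n \<ge> 1" unfolding n_def by simp
  have ee: "e \<bullet> e = 1"
  proof -
    have "sqrt n * sqrt n = n" using npos by simp
    hence "n * (inverse (sqrt n) * inverse (sqrt n)) = 1" using npos
      by (simp add: field_simps)
    thus ?thesis unfolding e_def ones_vec_def n_def by (simp add: inner_vec_def)
  qed
  have Pe: "P *v e = e" unfolding e_def
    using P_ones[OF assms(1)] by (simp add: matrix_vector_mult_scaleR)
  have sn: "real CARD('n) * inverse (sqrt (real CARD('n))) = sqrt (real CARD('n))"
  proof -
    have "sqrt n * sqrt n = n" using npos by simp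
    thus ?thesis unfolding n_def[symmetric] using npos by (simp add: field_simps)
  qed
  have um: "u \<in> mean_zero"
  proof -
    have "(\<Sum>i\<in>UNIV. u $ i) = (\<Sum>i\<in>UNIV. w $ i) - a * sqrt n"
      unfolding u_def e_def ones_vec_def n_def by (simp add: sum_subtractf sn)
    moreover have "a * sqrt n = (\<Sum>i\<in>UNIV. w $ i)"
    proof -
      have "inverse (sqrt n) * sqrt n = 1" using npos by simp
      hence "(\<Sum>i\<in>UNIV. w $ i * inverse (sqrt n)) * sqrt n = (\<Sum>i\<in>UNIV. w $ i) * (inverse (sqrt n) * sqrt n)"
        by (simp only: sum_distrib_right mult.assoc)
      moreover have "a = (\<Sum>i\<in>UNIV. w $ i * inverse (sqrt n))"
        unfolding a_def e_def ones_vec_def inner_vec_def by (simp add: mult.commute)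
      ultimately show ?thesis using \<open>inverse (sqrt n) * sqrt n = 1\<close> by simp
    qed
    ultimately show ?thesis unfolding mean_zero_def by simp
  qed
  have uw: "norm u \<le> norm w"
  proof -
    have "(norm u)^2 = (norm w)^2 - a^2"
      unfolding u_def power2_norm_eq_inner using ee
      by (simp add: inner_diff_left inner_diff_right a_def inner_commute power2_eq_square)
    hence "(norm u)^2 \<le> (norm w)^2" by simp
    thus ?thesis by (rule power2_le_imp_le) simp
  qed
  have s0: "s \<ge> 0" unfolding s_def using restr_bound(2)[OF um] .
  have Pu: "norm (P *v u) \<le> s * norm w"
    using order_trans[OF restr_bound(1)[OF um, of P] mult_left_mono[OF uw s0[unfolded s_def]]]
    unfolding s_def .
  have "w \<bullet> (P *v w) = w \<bullet> (P *v (a *\<^sub>R e + u))" unfolding u_def by simp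
  also have "\<dots> = a^2 + w \<bullet> (P *v u)"
  proof -
    have "P *v (a *\<^sub>R e + u) = a *\<^sub>R e + P *v u"
      by (simp add: matrix_vector_right_distrib matrix_vector_mult_scaleR Pe)
    hence "w \<bullet> (P *v (a *\<^sub>R e + u)) = a * (w \<bullet> e) + w \<bullet> (P *v u)"
      by (simp add: inner_add_right)
    thus ?thesis unfolding a_def[symmetric] by (simp add: power2_eq_square)
  qed
  also have "\<dots> \<le> a^2 + s * (norm w)^2"
  proof -
    have "w \<bullet> (P *v u) \<le> norm w * norm (P *v u)" by (rule norm_cauchy_schwarz)
    also have "\<dots> \<le> norm w * (s * norm w)" using Pu by (simp add: mult_left_mono)
    finally show ?thesis by (simp add: power2_eq_square algebra_simps)
  qed
  finally have wPw: "w \<bullet> (P *v w) \<le> a^2 + s * (norm w)^2" .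
  have aa: "a^2 \<le> ((1 - s)/3)^2 * (norm w)^2"
  proof -
    have "\<bar>a\<bar> \<le> (1 - s)/3 * norm w" using assms(4) unfolding a_def e_def n_def s_def .
    hence "\<bar>a\<bar>^2 \<le> ((1 - s)/3 * norm w)^2" by (rule power_mono) simp
    moreover have "((1 - s)/3 * norm w)^2 = ((1 - s)/3)^2 * (norm w)^2"
      by (rule power_mult_distrib)
    ultimately show ?thesis by simp
  qed
  have L0: "L_obj P 0 = - n * ln n" unfolding L_obj_def n_def by simp
  have Lw: "L_obj P w \<le> w \<bullet> (P *v w) - (norm w)^2"
  proof -
    have "(\<Sum>i\<in>UNIV. w $ i * w $ i) \<le> (\<Sum>i\<in>UNIV. ln (\<Sum>j\<in>UNIV. exp (w $ i * w $ j)))"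
    proof (rule sum_mono)
      fix i
      have "exp (w $ i * w $ i) \<le> (\<Sum>j\<in>UNIV. exp (w $ i * w $ j))"
        by (rule member_le_sum) auto
      hence "ln (exp (w $ i * w $ i)) \<le> ln (\<Sum>j\<in>UNIV. exp (w $ i * w $ j))"
        using ln_le_cancel_iff[of "exp (w $ i * w $ i)" "\<Sum>j\<in>UNIV. exp (w $ i * w $ j)"]
          order_less_le_trans[OF exp_gt_zero] by blast
      thus "w $ i * w $ i \<le> ln (\<Sum>j\<in>UNIV. exp (w $ i * w $ j))" by simp
    qed
    moreover have "(norm w)^2 = (\<Sum>i\<in>UNIV. w $ i * w $ i)"
      by (simp add: power2_norm_eq_inner inner_vec_def)
    ultimately show ?thesis unfolding L_obj_def by linarith
  qed
  have key: "(norm w)^2 * (1 - s) / 2 \<le> n * ln n"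
  proof -
    have "- n * ln n \<le> w \<bullet> (P *v w) - (norm w)^2" using assms(3) L0 Lw by smt
    hence h: "(norm w)^2 - a^2 - s * (norm w)^2 \<le> n * ln n" using wPw by linarith
    have s1: "s < 1" using assms(2) s_def by simp
    obtain x where x: "x = 1 - s" "0 < x" "x \<le> 1" using s0 s1 by auto
    have "x * x \<le> x" using mult_left_mono[of x 1 x] x by simp
    moreover have "((1 - s)/3)^2 = (x * x) / 9" using x by (simp add: power2_eq_square)
    moreover have "(1 - s) / 2 = x / 2" using x by simp
    moreover have "0 < x" using x by simp
    ultimately have "((1 - s)/3)^2 \<le> (1 - s) / 2" by linarith
    hence "((1 - s)/3)^2 * (norm w)^2 \<le> (1 - s) / 2 * (norm w)^2" by (rule mult_right_mono) simp_all
    thus ?thesis using h aa by (simp add: algebra_simps)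
  qed
  have s1: "1 - s > 0" using assms(2) s_def by simp
  from key s1 show ?thesis unfolding n_def[symmetric] s_def[symmetric]
    by (simp add: field_simps)
qed

end
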